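(* Let $N,L,Q$ be positive integers, let $V=\{v_1,\dots,v_N\}$, and let $t=(t_i(l))_{i\in[N],\,l\in[L]}$ be an arbitrary assignment with $t_i(l)\in[Q]\cup\{\emptyset\}$. Then $t$ is the natural labeling of some community structure $(V,\mathcal{C},\mathcal{S})$ with communities indexed by $[Q]$ that satisfies WPP if and only if $$\forall i,j\in[N],\ \forall l,k\in[L]:\quad \big(t_i(l)=t_j(k)\neq\emptyset\big)\ \Longrightarrow\ \big(t_i(k)=t_j(k)\big).$$
   Context: A community structure on $V$ with $L$ layers is a triple $(V,\mathcal{C},\mathcal{S})$ where $\mathcal{C}=\{C_1,\dots,C_Q\}$ is a family of pairwise distinct subsets $C_q\subseteq V$ (the communities, indexed by $q\in[Q]=\{1,\dots,Q\}$), and $\mathcal{S}=(S_1,\dots,S_L)$ with $S_l\subseteq\mathcal{C}$ the set of communities present in layer $l$. The triple satisfies the well partitioned property (WPP) if for every $l\in[L]$ and all $C_a,C_b\in S_l$, $C_a\cap C_b\neq\emptyset$ implies $C_a=C_b$ (i.e. $a=b$). For a triple satisfying WPP, its natural labeling is $t_i(l)=a$ if $v_i\in C_a$ and $C_a\in S_l$, and $t_i(l)=\emptyset$ if no such $a$ exists (well defined by WPP).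
   Formalization: The communities $C_1,\dots,C_Q$ are an arbitrary indexed family of subsets of V, without the requirement that they be pairwise distinct. The statement above fails without it. *)

theory Defs
  imports Main
begin

text \<open>Vertices v_1..v_N are represented by their indices 1..N; layers by 1..L;
community indices by [Q] = 1..Q. A community structure is given by
C :: nat => nat set (community q is C q, a subset of V) and
S :: nat => nat set (S l is the set of indices of communities present in layer l).
Labels: None stands for the empty label, Some a for label a.\<close>

definition community_structure ::
  "nat \<Rightarrow> nat \<Rightarrow> nat \<Rightarrow> (nat \<Rightarrow> nat set) \<Rightarrow> (nat \<Rightarrow> nat set) \<Rightarrow> bool" where
  "community_structure N L Q C S \<longleftrightarrow>
     (\<forall>q\<in>{1..Q}. C q \<subseteq> {1..N}) \<and> (\<forall>l\<in>{1..L}. S l \<subseteq> {1..Q})"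

definition wpp :: "nat \<Rightarrow> (nat \<Rightarrow> nat set) \<Rightarrow> (nat \<Rightarrow> nat set) \<Rightarrow> bool" where
  "wpp L C S \<longleftrightarrow>
     (\<forall>l\<in>{1..L}. \<forall>a\<in>S l. \<forall>b\<in>S l. C a \<inter> C b \<noteq> {} \<longrightarrow> a = b)"

definition natural_labeling ::
  "nat \<Rightarrow> nat \<Rightarrow> (nat \<Rightarrow> nat set) \<Rightarrow> (nat \<Rightarrow> nat set) \<Rightarrow> (nat \<Rightarrow> nat \<Rightarrow> nat option) \<Rightarrow> bool" where
  "natural_labeling N L C S t \<longleftrightarrow>
     (\<forall>i\<in>{1..N}. \<forall>l\<in>{1..L}.
        (\<forall>a. t i l = Some a \<longleftrightarrow> (i \<in> C a \<and> a \<in> S l)) \<and>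
        (t i l = None \<longleftrightarrow> \<not> (\<exists>a. i \<in> C a \<and> a \<in> S l)))"

end

theory Submission
  imports Defs
begin

theorem theorem1:
  fixes N L Q :: nat and t :: "nat \<Rightarrow> nat \<Rightarrow> nat option"
  assumes "N > 0" and "L > 0" and "Q > 0"
    and "\<forall>i\<in>{1..N}. \<forall>l\<in>{1..L}. t i l \<in> {None} \<union> Some ` {1..Q}"
  shows "(\<exists>C S. community_structure N L Q C S \<and> wpp L C S \<and> natural_labeling N L C S t)
     \<longleftrightarrow> (\<forall>i\<in>{1..N}. \<forall>j\<in>{1..N}. \<forall>l\<in>{1..L}. \<forall>k\<in>{1..L}.
            (t i l = t j k \<and> t i l \<noteq> None) \<longrightarrow> t i k = t j k)"
proof
  assume "\<exists>C S. community_structure N L Q C S \<and> wpp L C S \<and> natural_labeling N L C S t"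
  then obtain C S where nl: "natural_labeling N L C S t" by blast
  show "\<forall>i\<in>{1..N}. \<forall>j\<in>{1..N}. \<forall>l\<in>{1..L}. \<forall>k\<in>{1..L}.
            (t i l = t j k \<and> t i l \<noteq> None) \<longrightarrow> t i k = t j k"
  proof (intro ballI impI)
    fix i j l k assume r: "i \<in> {1..N}" "j \<in> {1..N}" "l \<in> {1..L}" "k \<in> {1..L}"
      and h: "t i l = t j k \<and> t i l \<noteq> None"
    then obtain a where a: "t i l = Some a" "t j k = Some a" by (metis option.exhaust)
    have "i \<in> C a" using nl r a unfolding natural_labeling_def by blast
    moreover have "a \<in> S k" using nl r a unfolding natural_labeling_def by blast
    ultimately have "t i k = Some a" using nl r unfolding natural_labeling_def by blast
    then show "t i k = t j k" using a by simp
  qed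
next
  assume H: "\<forall>i\<in>{1..N}. \<forall>j\<in>{1..N}. \<forall>l\<in>{1..L}. \<forall>k\<in>{1..L}.
            (t i l = t j k \<and> t i l \<noteq> None) \<longrightarrow> t i k = t j k"
  define C where "C a = {i \<in> {1..N}. \<exists>l\<in>{1..L}. t i l = Some a}" for a
  define S where "S l = {a. \<exists>i\<in>{1..N}. t i l = Some a}" for l
  have key: "t i l = Some a" if hh: "i \<in> C a" "a \<in> S l" "l \<in> {1..L}" for i l a
  proof -
    obtain l' where l': "l' \<in> {1..L}" "t i l' = Some a" "i \<in> {1..N}" using hh(1) unfolding C_def by auto
    obtain j where j: "j \<in> {1..N}" "t j l = Some a" using hh(2) unfolding S_def by auto
    show ?thesis using H l' j hh(3) by (metis option.distinct(1))
  qed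
  have cs: "community_structure N L Q C S"
    unfolding community_structure_def C_def S_def using assms(4) by fastforce
  have w: "wpp L C S"
    unfolding wpp_def
  proof (intro ballI impI)
    fix l a b assume "l \<in> {1..L}" "a \<in> S l" "b \<in> S l" "C a \<inter> C b \<noteq> {}"
    then obtain x where "x \<in> C a" "x \<in> C b" by blast
    have "t x l = Some a" by (rule key) fact+
    moreover have "t x l = Some b" by (rule key) fact+
    ultimately show "a = b" by simp
  qed
  have n: "natural_labeling N L C S t"
    unfolding natural_labeling_def
  proof (intro ballI conjI allI)
    fix i l a assume r: "i \<in> {1..N}" "l \<in> {1..L}"
    show "t i l = Some a \<longleftrightarrow> (i \<in> C a \<and> a \<in> S l)"
    proof
      assume "t i l = Some a"
      then show "i \<in> C a \<and> a \<in> S l" using r unfolding C_def S_def by blast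
    next
      assume "i \<in> C a \<and> a \<in> S l"
      then show "t i l = Some a" using key r(2) by blast
    qed
  next
    fix i l assume r: "i \<in> {1..N}" "l \<in> {1..L}"
    show "t i l = None \<longleftrightarrow> \<not> (\<exists>a. i \<in> C a \<and> a \<in> S l)"
    proof
      assume "t i l = None"
      then show "\<not> (\<exists>a. i \<in> C a \<and> a \<in> S l)" using key r(2) by fastforce
    next
      assume h: "\<not> (\<exists>a. i \<in> C a \<and> a \<in> S l)"
      show "t i l = None"
      proof (rule ccontr)
        assume "t i l \<noteq> None"
        then obtain a where "t i l = Some a" by blast
        then have "i \<in> C a \<and> a \<in> S l" using r unfolding C_def S_def by blast
        then show False using h by blast
      qed
    qed
  qed
  show "\<exists>C S. community_structure N L Q C S \<and> wpp L C S \<and> natural_labeling N L C S t"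
    using cs w n by blast
qed

end
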